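(* Let $g$ be a nonnegative function on $\mathbb{R}^3$ with $$\int_{\mathbb{R}^3} g\,dv=1,\quad \int_{\mathbb{R}^3} g(v)v_i\,dv=0\ (i=1,2,3),\quad\int_{\mathbb{R}^3} g(v)|v|^2\,dv=3.$$ Suppose that $|\hat g(\xi)|\leq K_1e^{-K_2\varphi(|\xi|)}$ for all $\xi\in\mathbb{R}^3$, where $K_1\geq1$, $K_2>0$ and $\varphi:[0,+\infty)\to[0,+\infty)$ satisfies $\lim_{t\to+\infty}\varphi(t)=+\infty$. Then there exists $\eta>0$ such that for every $R>\eta$ there exists $K>0$ (depending on $R$) with $$|\hat g(\xi)|\leq e^{-K|\xi|^2}\ \text{ for }|\xi|<R,\qquad |\hat g(\xi)|\leq e^{-K\varphi(|\xi|)}\ \text{ for }|\xi|\geq R.$$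
   Context: $\hat g(\xi)=\int_{\mathbb{R}^3} g(v)e^{-i\xi\cdot v}dv$. *)

theory Defs
  imports "HOL-Analysis.Analysis"
begin

definition fourier3 :: "(real^3 \<Rightarrow> real) \<Rightarrow> real^3 \<Rightarrow> complex" where
  "fourier3 g \<xi> = (LINT v|lborel. complex_of_real (g v) * exp (- \<i> * complex_of_real (\<xi> \<bullet> v)))"

end

theory Submission
  imports Defs
begin


lemma cos_lb0: fixes x :: real assumes "x \<ge> 0" shows "1 - x\<^sup>2 / 2 \<le> cos x"
proof -
  let ?f = "\<lambda>x. cos x - 1 + x\<^sup>2/2"
  have "\<And>u. \<lbrakk>0 \<le> u; u \<le> x\<rbrakk> \<Longrightarrow> (?f has_real_derivative (u - sin u)) (at u)"
    by (auto intro!: derivative_eq_intros simp: field_simps power2_eq_square)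
  moreover have "\<And>u::real. 0 \<le> u \<Longrightarrow> u - sin u \<ge> 0" using sin_x_le_x by force
  ultimately have "?f 0 \<le> ?f x"
    by (intro DERIV_nonneg_imp_nondecreasing[OF assms]) blast
  then show ?thesis by simp
qed

lemma cos_lb: fixes x :: real shows "1 - x\<^sup>2 / 2 \<le> cos x"
  using cos_lb0[of x] cos_lb0[of "-x"] by (cases "x \<ge> 0") auto

lemma sin_lb0: fixes x :: real assumes "x \<ge> 0" shows "x - x^3 / 6 \<le> sin x"
proof -
  let ?f = "\<lambda>x. sin x - x + x^3/6"
  have "\<And>u. \<lbrakk>0 \<le> u; u \<le> x\<rbrakk> \<Longrightarrow> (?f has_real_derivative (cos u - 1 + u\<^sup>2/2)) (at u)"
    by (auto intro!: derivative_eq_intros simp: field_simps power2_eq_square)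
  moreover have "\<And>u::real. cos u - 1 + u\<^sup>2/2 \<ge> 0" using cos_lb by (simp add: algebra_simps)
  ultimately have "?f 0 \<le> ?f x"
    by (intro DERIV_nonneg_imp_nondecreasing[OF assms]) blast
  then show ?thesis by simp
qed

lemma cos_ub0: fixes x :: real assumes "x \<ge> 0" shows "cos x \<le> 1 - x\<^sup>2 / 2 + x^4/24"
proof -
  let ?f = "\<lambda>x. 1 - x\<^sup>2 / 2 + x^4/24 - cos x"
  have "\<And>u. \<lbrakk>0 \<le> u; u \<le> x\<rbrakk> \<Longrightarrow> (?f has_real_derivative (- u + u^3/6 + sin u)) (at u)"
    by (auto intro!: derivative_eq_intros simp: field_simps power2_eq_square)
  moreover have "\<And>u::real. 0 \<le> u \<Longrightarrow> - u + u^3/6 + sin u \<ge> 0" using sin_lb0 by (simp add: algebra_simps)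
  ultimately have "?f 0 \<le> ?f x"
    by (intro DERIV_nonneg_imp_nondecreasing[OF assms]) blast
  then show ?thesis by simp
qed

lemma cos_ub: fixes x :: real assumes "\<bar>x\<bar> \<le> 1" shows "x\<^sup>2 / 4 \<le> 1 - cos x"
proof -
  have "cos x \<le> 1 - x\<^sup>2 / 2 + x^4/24"
    using cos_ub0[of x] cos_ub0[of "-x"] by (cases "x \<ge> 0") auto
  moreover have "x^4 \<le> x\<^sup>2"
  proof -
    have h: "x\<^sup>2 \<le> 1" using assms by (simp add: abs_square_le_1)
    have "x^4 = x\<^sup>2 * x\<^sup>2" by algebra
    also have "\<dots> \<le> 1 * x\<^sup>2" by (rule mult_right_mono[OF h]) simp
    finally show ?thesis by simp
  qed
  moreover have "x\<^sup>2 \<ge> 0" by simp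
  ultimately show ?thesis by linarith
qed

lemma sin_x_bound: fixes x :: real shows "\<bar>sin x - x\<bar> \<le> x\<^sup>2"
proof -
  have a: "\<bar>sin y - y\<bar> \<le> y^3/6" if "y \<ge> 0" for y :: real
    using sin_lb0[OF that] sin_x_le_x[OF that] by simp
  have b: "\<bar>sin x - x\<bar> \<le> \<bar>x\<bar>^3/6"
    using a[of x] a[of "-x"] by (cases "x \<ge> 0") auto
  show ?thesis
  proof (cases "\<bar>x\<bar> \<le> 6")
    case True
    have "\<bar>x\<bar>^3/6 = \<bar>x\<bar> * x\<^sup>2 / 6" by (simp add: power2_eq_square power3_eq_cube)
    also have "\<dots> \<le> 6 * x\<^sup>2 / 6" using True by (intro divide_right_mono mult_right_mono) auto
    finally show ?thesis using b by simp
  next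
    case False
    have "\<bar>sin x - x\<bar> \<le> 2 * \<bar>x\<bar>" using abs_sin_x_le_abs_x[of x] by simp
    also have "\<dots> \<le> \<bar>x\<bar> * \<bar>x\<bar>" using False by (intro mult_right_mono) auto
    finally show ?thesis by (simp add: power2_eq_square)
  qed
qed




lemma exp_mi: "exp (- \<i> * complex_of_real x) = complex_of_real (cos x) - \<i> * complex_of_real (sin x)"
proof -
  have "exp (- \<i> * complex_of_real x) = cis (-x)" by (simp add: cis_conv_exp)
  then show ?thesis by (simp add: complex_eq_iff)
qed

lemma exp_mi': "exp (- (\<i> * complex_of_real x)) = complex_of_real (cos x) - \<i> * complex_of_real (sin x)"
  using exp_mi by simp

lemma hyper_null:
  fixes \<xi> :: "real^3" assumes "\<xi> \<noteq> 0"
  shows "{v. \<xi> \<bullet> v = b} \<in> null_sets lborel"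
proof -
  have "negligible {v. \<xi> \<bullet> v = b}" using negligible_hyperplane assms by blast
  then have "{v. \<xi> \<bullet> v = b} \<in> null_sets lebesgue" using negligible_iff_null_sets by blast
  moreover have "{v. \<xi> \<bullet> v = b} \<in> sets lborel"
    by measurable
  ultimately show ?thesis using null_sets_completion_iff by blast
qed

lemma cos_lip: fixes a b :: real shows "\<bar>cos a - cos b\<bar> \<le> \<bar>a - b\<bar>"
proof -
  have "\<bar>cos a - cos b\<bar> = 2 * \<bar>sin ((a + b) / 2)\<bar> * \<bar>sin ((b - a) / 2)\<bar>"
    by (simp add: cos_diff_cos abs_mult)
  also have "\<dots> \<le> 2 * 1 * \<bar>(b - a) / 2\<bar>"
    by (intro mult_mono abs_sin_x_le_abs_x) auto
  finally show ?thesis by simp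
qed

lemma sin_lip: fixes a b :: real shows "\<bar>sin a - sin b\<bar> \<le> \<bar>a - b\<bar>"
proof -
  have "\<bar>sin a - sin b\<bar> = 2 * \<bar>sin ((a - b) / 2)\<bar> * \<bar>cos ((a + b) / 2)\<bar>"
    by (simp add: sin_diff_sin abs_mult)
  also have "\<dots> \<le> 2 * \<bar>(a - b) / 2\<bar> * 1"
    by (intro mult_mono abs_sin_x_le_abs_x) auto
  finally show ?thesis by simp
qed

definition Cf :: "(real^3 \<Rightarrow> real) \<Rightarrow> real^3 \<Rightarrow> real" where
  "Cf g \<xi> = (LINT v|lborel. g v * cos (\<xi> \<bullet> v))"
definition Sf :: "(real^3 \<Rightarrow> real) \<Rightarrow> real^3 \<Rightarrow> real" where
  "Sf g \<xi> = (LINT v|lborel. g v * sin (\<xi> \<bullet> v))"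

context
  fixes g :: "real^3 \<Rightarrow> real"
  assumes g_nonneg: "\<And>v. g v \<ge> 0"
    and g_int: "integrable lborel g"
    and g_mass: "(LINT v|lborel. g v) = 1"
    and g_mom2_int: "integrable lborel (\<lambda>v. g v * (norm v)\<^sup>2)"
    and g_mom2: "(LINT v|lborel. g v * (norm v)\<^sup>2) = 3"
begin

lemma g_meas[measurable]: "g \<in> borel_measurable lborel"
  using g_int by blast

lemma int_cos: "integrable lborel (\<lambda>v. g v * cos (\<xi> \<bullet> v))"
  by (rule Bochner_Integration.integrable_bound[OF g_int]) (auto simp: abs_mult g_nonneg intro!: mult_left_le)

lemma int_sin: "integrable lborel (\<lambda>v. g v * sin (\<xi> \<bullet> v))"
  by (rule Bochner_Integration.integrable_bound[OF g_int]) (auto simp: abs_mult g_nonneg intro!: mult_left_le)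

lemma four_CS: "fourier3 g \<xi> = complex_of_real (Cf g \<xi>) - \<i> * complex_of_real (Sf g \<xi>)"
proof -
  have "fourier3 g \<xi> = (LINT v|lborel. complex_of_real (g v * cos (\<xi> \<bullet> v)) - \<i> * complex_of_real (g v * sin (\<xi> \<bullet> v)))"
    unfolding fourier3_def by (rule Bochner_Integration.integral_cong) (auto simp: exp_mi' algebra_simps)
  also have "\<dots> = complex_of_real (Cf g \<xi>) - \<i> * complex_of_real (Sf g \<xi>)"
  proof -
    have i1: "integrable lborel (\<lambda>v. complex_of_real (g v * cos (\<xi> \<bullet> v)))"
      using int_cos by (rule integrable_of_real)
    have i2: "integrable lborel (\<lambda>v. \<i> * complex_of_real (g v * sin (\<xi> \<bullet> v)))"
      using int_sin by (intro Bochner_Integration.integrable_mult_right integrable_of_real)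
    show ?thesis unfolding Cf_def Sf_def by (subst Bochner_Integration.integral_diff[OF i1 i2]) (simp only: integral_mult_right_zero integral_complex_of_real)
  qed
  finally show ?thesis .
qed

lemma norm_sq: "(norm (fourier3 g \<xi>))\<^sup>2 = (Cf g \<xi>)\<^sup>2 + (Sf g \<xi>)\<^sup>2"
  by (simp add: four_CS cmod_power2)

lemma four_le1: "norm (fourier3 g \<xi>) \<le> 1"
proof -
  have "norm (fourier3 g \<xi>) \<le> (LINT v|lborel. norm (complex_of_real (g v) * exp (- \<i> * complex_of_real (\<xi> \<bullet> v))))"
    unfolding fourier3_def by (rule integral_norm_bound)
  also have "\<dots> = (LINT v|lborel. g v)"
    by (rule Bochner_Integration.integral_cong) (auto simp: norm_mult g_nonneg norm_exp_eq_Re)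
  finally show ?thesis using g_mass by simp
qed

lemma CS_le1: "(Cf g \<xi>)\<^sup>2 + (Sf g \<xi>)\<^sup>2 \<le> 1"
proof -
  have "(norm (fourier3 g \<xi>))\<^sup>2 \<le> 1" using four_le1[of \<xi>] by (intro power_le_one) auto
  then show ?thesis using norm_sq[of \<xi>] by simp
qed

lemma int_m1: "integrable lborel (\<lambda>v. g v * norm v)"
proof (rule Bochner_Integration.integrable_bound[OF Bochner_Integration.integrable_add[OF g_int g_mom2_int]])
  show "(\<lambda>v. g v * norm v) \<in> borel_measurable lborel" by measurable
  show "AE x in lborel. norm (g x * norm x) \<le> norm (g x + g x * (norm x)\<^sup>2)"
  proof (intro AE_I2)
    fix x :: "real^3"
    have "(norm x - 1)\<^sup>2 \<ge> 0" by simp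
    moreover have "(norm x - 1)\<^sup>2 = (norm x)\<^sup>2 - 2 * norm x + 1" by (simp add: power2_diff)
    ultimately have "norm x \<le> 1 + (norm x)\<^sup>2" using norm_ge_zero[of x] by linarith
    then have "g x * norm x \<le> g x * (1 + (norm x)\<^sup>2)" using g_nonneg by (intro mult_left_mono) auto
    then show "norm (g x * norm x) \<le> norm (g x + g x * (norm x)\<^sup>2)"
      using g_nonneg[of x] by (simp add: algebra_simps)
  qed
qed

definition "Lm = (LINT v|lborel. g v * norm v)"

lemma Lm_nonneg: "Lm \<ge> 0" unfolding Lm_def using g_nonneg by simp

lemma Cf_lip: "\<bar>Cf g \<xi> - Cf g \<zeta>\<bar> \<le> Lm * norm (\<xi> - \<zeta>)"
proof -
  have "\<bar>Cf g \<xi> - Cf g \<zeta>\<bar> = \<bar>LINT v|lborel. g v * cos (\<xi> \<bullet> v) - g v * cos (\<zeta> \<bullet> v)\<bar>"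
    unfolding Cf_def using int_cos by simp
  also have "\<dots> \<le> (LINT v|lborel. norm (\<xi> - \<zeta>) * (g v * norm v))"
  proof (rule integral_abs_bound_integral)
    show "integrable lborel (\<lambda>v. g v * cos (\<xi> \<bullet> v) - g v * cos (\<zeta> \<bullet> v))" using int_cos by simp
    show "integrable lborel (\<lambda>v. norm (\<xi> - \<zeta>) * (g v * norm v))" using int_m1 by simp
    fix v :: "real^3"
    have "\<bar>cos (\<xi> \<bullet> v) - cos (\<zeta> \<bullet> v)\<bar> \<le> \<bar>(\<xi> - \<zeta>) \<bullet> v\<bar>" using cos_lip by (simp add: inner_diff_left)
    also have "\<dots> \<le> norm (\<xi> - \<zeta>) * norm v" by (rule Cauchy_Schwarz_ineq2)
    finally have "g v * \<bar>cos (\<xi> \<bullet> v) - cos (\<zeta> \<bullet> v)\<bar> \<le> g v * (norm (\<xi> - \<zeta>) * norm v)"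
      using g_nonneg by (intro mult_left_mono) auto
    moreover have "\<bar>g v * cos (\<xi> \<bullet> v) - g v * cos (\<zeta> \<bullet> v)\<bar> = g v * \<bar>cos (\<xi> \<bullet> v) - cos (\<zeta> \<bullet> v)\<bar>"
      using g_nonneg[of v] by (simp only: abs_mult flip: right_diff_distrib)
    ultimately show "\<bar>g v * cos (\<xi> \<bullet> v) - g v * cos (\<zeta> \<bullet> v)\<bar> \<le> norm (\<xi> - \<zeta>) * (g v * norm v)"
      by (simp add: ac_simps)
  qed
  also have "\<dots> = Lm * norm (\<xi> - \<zeta>)" unfolding Lm_def by simp
  finally show ?thesis .
qed

lemma Sf_lip: "\<bar>Sf g \<xi> - Sf g \<zeta>\<bar> \<le> Lm * norm (\<xi> - \<zeta>)"
proof -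
  have "\<bar>Sf g \<xi> - Sf g \<zeta>\<bar> = \<bar>LINT v|lborel. g v * sin (\<xi> \<bullet> v) - g v * sin (\<zeta> \<bullet> v)\<bar>"
    unfolding Sf_def using int_sin by simp
  also have "\<dots> \<le> (LINT v|lborel. norm (\<xi> - \<zeta>) * (g v * norm v))"
  proof (rule integral_abs_bound_integral)
    show "integrable lborel (\<lambda>v. g v * sin (\<xi> \<bullet> v) - g v * sin (\<zeta> \<bullet> v))" using int_sin by simp
    show "integrable lborel (\<lambda>v. norm (\<xi> - \<zeta>) * (g v * norm v))" using int_m1 by simp
    fix v :: "real^3"
    have "\<bar>sin (\<xi> \<bullet> v) - sin (\<zeta> \<bullet> v)\<bar> \<le> \<bar>(\<xi> - \<zeta>) \<bullet> v\<bar>" using sin_lip by (simp add: inner_diff_left)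
    also have "\<dots> \<le> norm (\<xi> - \<zeta>) * norm v" by (rule Cauchy_Schwarz_ineq2)
    finally have "g v * \<bar>sin (\<xi> \<bullet> v) - sin (\<zeta> \<bullet> v)\<bar> \<le> g v * (norm (\<xi> - \<zeta>) * norm v)"
      using g_nonneg by (intro mult_left_mono) auto
    moreover have "\<bar>g v * sin (\<xi> \<bullet> v) - g v * sin (\<zeta> \<bullet> v)\<bar> = g v * \<bar>sin (\<xi> \<bullet> v) - sin (\<zeta> \<bullet> v)\<bar>"
      using g_nonneg[of v] by (simp only: abs_mult flip: right_diff_distrib)
    ultimately show "\<bar>g v * sin (\<xi> \<bullet> v) - g v * sin (\<zeta> \<bullet> v)\<bar> \<le> norm (\<xi> - \<zeta>) * (g v * norm v)"
      by (simp add: ac_simps)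
  qed
  also have "\<dots> = Lm * norm (\<xi> - \<zeta>)" unfolding Lm_def by simp
  finally show ?thesis .
qed

lemma four_cont: "continuous_on UNIV (\<lambda>\<xi>. norm (fourier3 g \<xi>))"
proof -
  have c1: "continuous_on UNIV (Cf g)"
  proof (rule lipschitz_on_continuous_on)
    show "Lm-lipschitz_on UNIV (Cf g)" unfolding lipschitz_on_def
      using Lm_nonneg Cf_lip by (simp add: dist_real_def dist_norm)
  qed
  have c2: "continuous_on UNIV (Sf g)"
  proof (rule lipschitz_on_continuous_on)
    show "Lm-lipschitz_on UNIV (Sf g)" unfolding lipschitz_on_def
      using Lm_nonneg Sf_lip by (simp add: dist_real_def dist_norm)
  qed
  have "(\<lambda>\<xi>. norm (fourier3 g \<xi>)) = (\<lambda>\<xi>. sqrt ((Cf g \<xi>)\<^sup>2 + (Sf g \<xi>)\<^sup>2))"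
    by (rule ext) (simp flip: norm_sq)
  then show ?thesis using c1 c2 by (simp only:) (intro continuous_intros)
qed

end

lemma inner_sq_le: fixes x y :: "real^3" shows "(x \<bullet> y)\<^sup>2 \<le> (norm x)\<^sup>2 * (norm y)\<^sup>2"
proof -
  have "\<bar>x \<bullet> y\<bar> \<le> norm x * norm y" by (rule Cauchy_Schwarz_ineq2)
  then have "\<bar>x \<bullet> y\<bar>\<^sup>2 \<le> (norm x * norm y)\<^sup>2" by (intro power_mono) auto
  then show ?thesis by (simp add: power_mult_distrib)
qed

definition Pf :: "(real^3 \<Rightarrow> real) \<Rightarrow> real^3 \<Rightarrow> real" where
  "Pf g u = (LINT v|lborel. g v * indicator (cball 0 2) v * (u \<bullet> v)\<^sup>2)"

context
  fixes g :: "real^3 \<Rightarrow> real"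
  assumes g_nonneg: "\<And>v. g v \<ge> 0"
    and g_int: "integrable lborel g"
    and g_mass: "(LINT v|lborel. g v) = 1"
    and g_mom1_int: "\<And>i. integrable lborel (\<lambda>v. g v * v $ i)"
    and g_mom1: "\<And>i. (LINT v|lborel. g v * v $ i) = 0"
    and g_mom2_int: "integrable lborel (\<lambda>v. g v * (norm v)\<^sup>2)"
    and g_mom2: "(LINT v|lborel. g v * (norm v)\<^sup>2) = 3"
begin

lemma g_meas2[measurable]: "g \<in> borel_measurable lborel"
  using g_int by blast

lemma CS_lt1:
  assumes "\<xi> \<noteq> 0" shows "(Cf g \<xi>)\<^sup>2 + (Sf g \<xi>)\<^sup>2 < 1"
proof (rule ccontr)
  assume "\<not> ?thesis"
  with CS_le1[OF g_nonneg g_int g_mass g_mom2_int g_mom2, of \<xi>]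
  have eq: "(Cf g \<xi>)\<^sup>2 + (Sf g \<xi>)\<^sup>2 = 1" by linarith
  obtain x0 where c: "Cf g \<xi> = cos x0" "Sf g \<xi> = sin x0" using sincos_total_2pi[OF eq] by metis
  note ic = int_cos[OF g_nonneg g_int g_mass g_mom2_int g_mom2]
  note isn = int_sin[OF g_nonneg g_int g_mass g_mom2_int g_mom2]
  define h where "h v = g v - (cos x0 * (g v * cos (\<xi> \<bullet> v)) + sin x0 * (g v * sin (\<xi> \<bullet> v)))" for v
  have hint: "integrable lborel h"
    unfolding h_def using g_int ic isn by auto
  have "(LINT v|lborel. h v) = 1 - (cos x0 * Cf g \<xi> + sin x0 * Sf g \<xi>)"
    unfolding h_def Cf_def Sf_def using g_int ic isn g_mass by simp
  also have "\<dots> = 0" using c sin_cos_squared_add3[of x0] by simp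
  finally have h0: "(LINT v|lborel. h v) = 0" .
  have hform: "h v = g v * (1 - cos (\<xi> \<bullet> v - x0))" for v
    by (simp add: h_def cos_diff algebra_simps)
  have hnn: "h v \<ge> 0" for v unfolding hform using g_nonneg by simp
  have ae1: "AE v in lborel. h v = 0"
    using integral_nonneg_eq_0_iff_AE[OF hint] hnn h0 by simp
  have N: "(\<Union>n::int. {v. \<xi> \<bullet> v = x0 + real_of_int n * 2 * pi}) \<in> null_sets lborel"
    by (intro null_sets_UN hyper_null assms)
  have ae2: "AE v in lborel. v \<notin> (\<Union>n::int. {v. \<xi> \<bullet> v = x0 + real_of_int n * 2 * pi})"
    by (rule AE_not_in[OF N])
  have "AE v in lborel. g v = 0"
    using ae1 ae2
  proof eventually_elim
    case (elim v)
    show ?case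
    proof (rule ccontr)
      assume "g v \<noteq> 0"
      with elim(1) have "cos (\<xi> \<bullet> v - x0) = 1" unfolding hform by simp
      then obtain n :: int where "\<xi> \<bullet> v - x0 = real_of_int n * 2 * pi"
        using cos_one_2pi_int[of "\<xi> \<bullet> v - x0"] by blast
      then have "\<xi> \<bullet> v = x0 + real_of_int n * 2 * pi" by simp
      with elim(2) show False by blast
    qed
  qed
  then have "(LINT v|lborel. g v) = 0" by (rule integral_eq_zero_AE)
  with g_mass show False by simp
qed

lemma ind_meas: "indicator (cball (0::real^3) 2) \<in> borel_measurable lborel"
  by (intro borel_measurable_indicator) (simp add: borel_closed)

lemma sq_meas: "(\<lambda>x::real^3. (u \<bullet> x)\<^sup>2) \<in> borel_measurable lborel"
  using borel_measurable_continuous_onI[of "\<lambda>x::real^3. (u \<bullet> x)\<^sup>2"]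
  by (simp add: continuous_intros)

lemma int_P: "integrable lborel (\<lambda>v. g v * indicator (cball 0 2) v * (u \<bullet> v)\<^sup>2)"
proof (rule Bochner_Integration.integrable_bound[OF integrable_mult_left[OF g_int, of "4 * (norm u)\<^sup>2"]])
  show "(\<lambda>v. g v * indicator (cball 0 2) v * (u \<bullet> v)\<^sup>2) \<in> borel_measurable lborel"
    using g_meas2 ind_meas sq_meas by (intro borel_measurable_times) auto
  show "AE v in lborel. norm (g v * indicator (cball 0 2) v * (u \<bullet> v)\<^sup>2) \<le> norm (g v * (4 * (norm u)\<^sup>2))"
  proof (intro AE_I2)
    fix v :: "real^3"
    show "norm (g v * indicator (cball 0 2) v * (u \<bullet> v)\<^sup>2) \<le> norm (g v * (4 * (norm u)\<^sup>2))"
    proof (cases "v \<in> cball 0 2")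
      case True
      then have "norm v \<le> 2" by simp
      then have "(norm v)\<^sup>2 \<le> 2\<^sup>2" by (intro power_mono) auto
      then have "(norm u)\<^sup>2 * (norm v)\<^sup>2 \<le> (norm u)\<^sup>2 * 4" by (intro mult_left_mono) auto
      then have "(u \<bullet> v)\<^sup>2 \<le> (norm u)\<^sup>2 * 4" using inner_sq_le[of u v] by linarith
      then have "g v * (u \<bullet> v)\<^sup>2 \<le> g v * (4 * (norm u)\<^sup>2)" using g_nonneg[of v]
        by (intro mult_left_mono) (auto simp: algebra_simps)
      then show ?thesis using True g_nonneg[of v] by (simp add: abs_mult)
    next
      case False
      then show ?thesis by (simp add: g_nonneg abs_mult)
    qed
  qed
qed

lemma int_gind: "integrable lborel (\<lambda>v. g v * indicator (cball 0 2) v)"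
  by (rule Bochner_Integration.integrable_bound[OF g_int]) (auto simp: abs_mult g_nonneg indicator_def)

lemma mass_ball: "(LINT v|lborel. g v * indicator (cball 0 2) v) \<ge> 1/4"
proof -
  have "(LINT v|lborel. g v) \<le> (LINT v|lborel. g v * indicator (cball 0 2) v + g v * (norm v)\<^sup>2 / 4)"
  proof (rule integral_mono)
    show "integrable lborel g" by (rule g_int)
    show "integrable lborel (\<lambda>v. g v * indicator (cball 0 2) v + g v * (norm v)\<^sup>2 / 4)"
      using int_gind g_mom2_int by auto
    fix v :: "real^3"
    show "g v \<le> g v * indicator (cball 0 2) v + g v * (norm v)\<^sup>2 / 4"
    proof (cases "v \<in> cball 0 2")
      case True then show ?thesis using g_nonneg[of v] by simp
    next
      case False
      then have "2 < norm v" by simp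
      then have "2\<^sup>2 < (norm v)\<^sup>2" by (intro power_strict_mono) auto
      then have "g v * 1 \<le> g v * ((norm v)\<^sup>2 / 4)" using g_nonneg[of v] by (intro mult_left_mono) auto
      then show ?thesis using False by simp
    qed
  qed
  also have "\<dots> = (LINT v|lborel. g v * indicator (cball 0 2) v) + 3 / 4"
    using int_gind g_mom2_int g_mom2 by simp
  finally show ?thesis using g_mass by simp
qed

lemma P_nonneg: "Pf g u \<ge> 0"
  unfolding Pf_def using g_nonneg by (auto intro!: integral_nonneg simp: indicator_def)

lemma P_pos: assumes "u \<noteq> 0" shows "Pf g u > 0"
proof (rule ccontr)
  assume "\<not> ?thesis"
  with P_nonneg[of u] have "Pf g u = 0" by linarith
  then have ae1: "AE v in lborel. g v * indicator (cball 0 2) v * (u \<bullet> v)\<^sup>2 = 0"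
    unfolding Pf_def using integral_nonneg_eq_0_iff_AE[OF int_P[of u]] g_nonneg
    by (simp add: indicator_def)
  have ae2: "AE v in lborel. v \<notin> {v. u \<bullet> v = 0}"
    by (rule AE_not_in[OF hyper_null[OF assms]])
  have "AE v in lborel. g v * indicator (cball 0 2) v = 0"
    using ae1 ae2 by eventually_elim auto
  then have "(LINT v|lborel. g v * indicator (cball 0 2) v) = 0" by (rule integral_eq_zero_AE)
  with mass_ball show False by simp
qed

lemma P_lip:
  assumes "norm u \<le> 1" "norm w \<le> 1"
  shows "\<bar>Pf g u - Pf g w\<bar> \<le> 8 * norm (u - w)"
proof -
  have "\<bar>Pf g u - Pf g w\<bar> = \<bar>LINT v|lborel. g v * indicator (cball 0 2) v * (u \<bullet> v)\<^sup>2 - g v * indicator (cball 0 2) v * (w \<bullet> v)\<^sup>2\<bar>"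
    unfolding Pf_def using int_P by simp
  also have "\<dots> \<le> (LINT v|lborel. 8 * norm (u - w) * g v)"
  proof (rule integral_abs_bound_integral)
    show "integrable lborel (\<lambda>v. g v * indicator (cball 0 2) v * (u \<bullet> v)\<^sup>2 - g v * indicator (cball 0 2) v * (w \<bullet> v)\<^sup>2)"
      using int_P by simp
    show "integrable lborel (\<lambda>v. 8 * norm (u - w) * g v)" using g_int by simp
    fix v :: "real^3"
    show "\<bar>g v * indicator (cball 0 2) v * (u \<bullet> v)\<^sup>2 - g v * indicator (cball 0 2) v * (w \<bullet> v)\<^sup>2\<bar> \<le> 8 * norm (u - w) * g v"
    proof (cases "v \<in> cball 0 2")
      case True
      then have nv: "norm v \<le> 2" by simp
      have "(u \<bullet> v)\<^sup>2 - (w \<bullet> v)\<^sup>2 = ((u - w) \<bullet> v) * ((u + w) \<bullet> v)"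
        by (simp add: inner_diff_left inner_add_left power2_eq_square algebra_simps)
      then have "\<bar>(u \<bullet> v)\<^sup>2 - (w \<bullet> v)\<^sup>2\<bar> = \<bar>(u - w) \<bullet> v\<bar> * \<bar>(u + w) \<bullet> v\<bar>" by (simp add: abs_mult)
      also have "\<dots> \<le> (norm (u - w) * norm v) * (norm (u + w) * norm v)"
        by (intro mult_mono Cauchy_Schwarz_ineq2) auto
      also have "\<dots> \<le> (norm (u - w) * 2) * (2 * 2)"
      proof -
        have a: "norm (u + w) * norm v \<le> 2 * 2"
          using norm_triangle_ineq[of u w] assms nv by (intro mult_mono) auto
        have b: "norm (u - w) * norm v \<le> norm (u - w) * 2"
          using nv by (intro mult_left_mono) auto
        show ?thesis by (rule mult_mono[OF b a]) auto
      qed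
      finally have "\<bar>(u \<bullet> v)\<^sup>2 - (w \<bullet> v)\<^sup>2\<bar> \<le> 8 * norm (u - w)" by simp
      then have "g v * \<bar>(u \<bullet> v)\<^sup>2 - (w \<bullet> v)\<^sup>2\<bar> \<le> g v * (8 * norm (u - w))"
        using g_nonneg by (intro mult_left_mono) auto
      moreover have "\<bar>g v * indicator (cball 0 2) v * (u \<bullet> v)\<^sup>2 - g v * indicator (cball 0 2) v * (w \<bullet> v)\<^sup>2\<bar> = g v * \<bar>(u \<bullet> v)\<^sup>2 - (w \<bullet> v)\<^sup>2\<bar>"
        using True g_nonneg[of v] by (simp only: abs_mult flip: right_diff_distrib) simp
      ultimately show ?thesis by (simp add: ac_simps)
    next
      case False
      then show ?thesis using g_nonneg[of v] by simp
    qed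
  qed
  also have "\<dots> = 8 * norm (u - w)" using g_mass by simp
  finally show ?thesis .
qed

lemma P_hom: "Pf g (c *\<^sub>R u) = c\<^sup>2 * Pf g u"
proof -
  have "(\<lambda>v. g v * indicator (cball 0 2) v * ((c *\<^sub>R u) \<bullet> v)\<^sup>2) = (\<lambda>v. c\<^sup>2 * (g v * indicator (cball 0 2) v * (u \<bullet> v)\<^sup>2))"
    by (rule ext) (simp add: power_mult_distrib)
  then show ?thesis unfolding Pf_def by simp
qed

lemma P_min: "\<exists>p>0. \<forall>\<xi>. Pf g \<xi> \<ge> p * (norm \<xi>)\<^sup>2"
proof -
  have cont: "continuous_on (sphere 0 1) (Pf g)"
  proof (rule lipschitz_on_continuous_on)
    show "8-lipschitz_on (sphere 0 1) (Pf g)" unfolding lipschitz_on_def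
      using P_lip by (simp add: dist_real_def dist_norm)
  qed
  obtain u0 where u0: "u0 \<in> sphere 0 1" "\<And>y. y \<in> sphere 0 1 \<Longrightarrow> Pf g u0 \<le> Pf g y"
    using continuous_attains_inf[OF compact_sphere _ cont] by auto
  have p0: "Pf g u0 > 0" using u0(1) by (intro P_pos) auto
  have "Pf g \<xi> \<ge> Pf g u0 * (norm \<xi>)\<^sup>2" for \<xi>
  proof (cases "\<xi> = 0")
    case True then show ?thesis using P_nonneg[of \<xi>] by simp
  next
    case False
    define u where "u = (1 / norm \<xi>) *\<^sub>R \<xi>"
    have us: "u \<in> sphere 0 1" using False by (simp add: u_def)
    have "\<xi> = norm \<xi> *\<^sub>R u" using False by (simp add: u_def)
    then have "Pf g \<xi> = (norm \<xi>)\<^sup>2 * Pf g u" using P_hom by metis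
    moreover have "Pf g u0 \<le> Pf g u" using u0(2)[OF us] .
    ultimately show ?thesis using mult_right_mono[of "Pf g u0" "Pf g u" "(norm \<xi>)\<^sup>2"]
      by (simp add: mult.commute)
  qed
  then show ?thesis using p0 by blast
qed



lemmas ic2 = int_cos[OF g_nonneg g_int g_mass g_mom2_int g_mom2]
lemmas is2 = int_sin[OF g_nonneg g_int g_mass g_mom2_int g_mom2]

lemma C_upper:
  assumes "norm \<xi> \<le> 1/2"
  shows "Cf g \<xi> \<le> 1 - Pf g \<xi> / 4"
proof -
  have "(LINT v|lborel. g v * indicator (cball 0 2) v * (\<xi> \<bullet> v)\<^sup>2 / 4) \<le> (LINT v|lborel. g v - g v * cos (\<xi> \<bullet> v))"
  proof (rule integral_mono)
    show "integrable lborel (\<lambda>v. g v * indicator (cball 0 2) v * (\<xi> \<bullet> v)\<^sup>2 / 4)"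
      using int_P[of \<xi>] by simp
    show "integrable lborel (\<lambda>v. g v - g v * cos (\<xi> \<bullet> v))" using g_int ic2 by simp
    fix v :: "real^3"
    show "g v * indicator (cball 0 2) v * (\<xi> \<bullet> v)\<^sup>2 / 4 \<le> g v - g v * cos (\<xi> \<bullet> v)"
    proof (cases "v \<in> cball 0 2")
      case True
      then have nv: "norm v \<le> 2" by simp
      have "\<bar>\<xi> \<bullet> v\<bar> \<le> norm \<xi> * norm v" by (rule Cauchy_Schwarz_ineq2)
      also have "\<dots> \<le> (1/2) * 2" using assms nv by (intro mult_mono) auto
      finally have "(\<xi> \<bullet> v)\<^sup>2 / 4 \<le> 1 - cos (\<xi> \<bullet> v)" by (intro cos_ub) simp
      then have "g v * ((\<xi> \<bullet> v)\<^sup>2 / 4) \<le> g v * (1 - cos (\<xi> \<bullet> v))"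
        using g_nonneg by (intro mult_left_mono) auto
      then show ?thesis using True by (simp add: right_diff_distrib)
    next
      case False
      have "g v * cos (\<xi> \<bullet> v) \<le> g v * 1" using g_nonneg by (intro mult_left_mono) auto
      then show ?thesis using False by simp
    qed
  qed
  then show ?thesis unfolding Pf_def Cf_def using g_int ic2 g_mass by simp
qed

lemma C_lower: "Cf g \<xi> \<ge> 1 - 3/2 * (norm \<xi>)\<^sup>2"
proof -
  have "(LINT v|lborel. g v - (norm \<xi>)\<^sup>2 / 2 * (g v * (norm v)\<^sup>2)) \<le> (LINT v|lborel. g v * cos (\<xi> \<bullet> v))"
  proof (rule integral_mono)
    show "integrable lborel (\<lambda>v. g v - (norm \<xi>)\<^sup>2 / 2 * (g v * (norm v)\<^sup>2))"
      using g_int g_mom2_int by simp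
    show "integrable lborel (\<lambda>v. g v * cos (\<xi> \<bullet> v))" using ic2 .
    fix v :: "real^3"
    have "1 - (norm \<xi>)\<^sup>2 * (norm v)\<^sup>2 / 2 \<le> 1 - (\<xi> \<bullet> v)\<^sup>2 / 2" using inner_sq_le[of \<xi> v] by simp
    also have "\<dots> \<le> cos (\<xi> \<bullet> v)" by (rule cos_lb)
    finally have "g v * (1 - (norm \<xi>)\<^sup>2 * (norm v)\<^sup>2 / 2) \<le> g v * cos (\<xi> \<bullet> v)"
      using g_nonneg by (intro mult_left_mono) auto
    then show "g v - (norm \<xi>)\<^sup>2 / 2 * (g v * (norm v)\<^sup>2) \<le> g v * cos (\<xi> \<bullet> v)"
      by (simp add: algebra_simps)
  qed
  then show ?thesis unfolding Cf_def using g_int g_mom2_int g_mass g_mom2 by simp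
qed

lemma first_mom: "(LINT v|lborel. g v * (\<xi> \<bullet> v)) = 0"
proof -
  have eq: "(\<lambda>v. g v * (\<xi> \<bullet> v)) = (\<lambda>v. \<Sum>i\<in>UNIV. \<xi> $ i * (g v * v $ i))"
    by (rule ext) (simp add: inner_vec_def sum_distrib_left algebra_simps)
  show ?thesis unfolding eq
    by (subst Bochner_Integration.integral_sum) (auto simp: g_mom1_int g_mom1)
qed

lemma int_first: "integrable lborel (\<lambda>v. g v * (\<xi> \<bullet> v))"
proof -
  have eq: "(\<lambda>v. g v * (\<xi> \<bullet> v)) = (\<lambda>v. \<Sum>i\<in>UNIV. \<xi> $ i * (g v * v $ i))"
    by (rule ext) (simp add: inner_vec_def sum_distrib_left algebra_simps)
  show ?thesis unfolding eq using g_mom1_int by auto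
qed

lemma S_bound: "\<bar>Sf g \<xi>\<bar> \<le> 3 * (norm \<xi>)\<^sup>2"
proof -
  have "Sf g \<xi> = (LINT v|lborel. g v * sin (\<xi> \<bullet> v) - g v * (\<xi> \<bullet> v))"
    unfolding Sf_def using is2 int_first first_mom by simp
  also have "\<bar>\<dots>\<bar> \<le> (LINT v|lborel. (norm \<xi>)\<^sup>2 * (g v * (norm v)\<^sup>2))"
  proof (rule integral_abs_bound_integral)
    show "integrable lborel (\<lambda>v. g v * sin (\<xi> \<bullet> v) - g v * (\<xi> \<bullet> v))" using is2 int_first by simp
    show "integrable lborel (\<lambda>v. (norm \<xi>)\<^sup>2 * (g v * (norm v)\<^sup>2))" using g_mom2_int by simp
    fix v :: "real^3"
    have "\<bar>sin (\<xi> \<bullet> v) - \<xi> \<bullet> v\<bar> \<le> (norm \<xi>)\<^sup>2 * (norm v)\<^sup>2"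
      using sin_x_bound[of "\<xi> \<bullet> v"] inner_sq_le[of \<xi> v] by linarith
    then have "g v * \<bar>sin (\<xi> \<bullet> v) - \<xi> \<bullet> v\<bar> \<le> g v * ((norm \<xi>)\<^sup>2 * (norm v)\<^sup>2)"
      using g_nonneg by (intro mult_left_mono) auto
    moreover have "\<bar>g v * sin (\<xi> \<bullet> v) - g v * (\<xi> \<bullet> v)\<bar> = g v * \<bar>sin (\<xi> \<bullet> v) - \<xi> \<bullet> v\<bar>"
      using g_nonneg[of v] by (simp only: abs_mult flip: right_diff_distrib)
    ultimately show "\<bar>g v * sin (\<xi> \<bullet> v) - g v * (\<xi> \<bullet> v)\<bar> \<le> (norm \<xi>)\<^sup>2 * (g v * (norm v)\<^sup>2)"
      by (simp add: ac_simps)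
  qed
  also have "\<dots> = 3 * (norm \<xi>)\<^sup>2" using g_mom2 by simp
  finally show ?thesis .
qed

lemma small_bound: "\<exists>\<delta>>0. \<exists>c>0. \<forall>\<xi>. norm \<xi> \<le> \<delta> \<longrightarrow> (Cf g \<xi>)\<^sup>2 + (Sf g \<xi>)\<^sup>2 \<le> 1 - c * (norm \<xi>)\<^sup>2"
proof -
  obtain p where p: "p > 0" "\<And>\<xi>. Pf g \<xi> \<ge> p * (norm \<xi>)\<^sup>2" using P_min by blast
  define q where "q = p / 4"
  have q: "q > 0" using p by (simp add: q_def)
  define \<delta> where "\<delta> = min (1/2) (sqrt (q / (q\<^sup>2 + 9)))"
  have "q / (q\<^sup>2 + 9) > 0" using q by (intro divide_pos_pos) (auto intro: add_nonneg_pos)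
  then have \<delta>: "\<delta> > 0" by (simp add: \<delta>_def)
  have "(Cf g \<xi>)\<^sup>2 + (Sf g \<xi>)\<^sup>2 \<le> 1 - q * (norm \<xi>)\<^sup>2" if n: "norm \<xi> \<le> \<delta>" for \<xi>
  proof -
    define s where "s = (norm \<xi>)\<^sup>2"
    have s0: "s \<ge> 0" by (simp add: s_def)
    have n1: "norm \<xi> \<le> 1/2" using n by (simp add: \<delta>_def)
    have "s \<le> (1/2)\<^sup>2" unfolding s_def using n1 by (intro power_mono) auto
    then have s1: "s \<le> 1/4" by (simp add: power2_eq_square)
    have "norm \<xi> \<le> sqrt (q / (q\<^sup>2 + 9))" using n by (simp add: \<delta>_def)
    then have "s \<le> (sqrt (q / (q\<^sup>2 + 9)))\<^sup>2" unfolding s_def by (intro power_mono) auto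
    then have s2: "s \<le> q / (q\<^sup>2 + 9)" using q by simp
    have qpos: "q\<^sup>2 + 9 > 0" by (simp add: add_nonneg_pos)
    have s3: "(q\<^sup>2 + 9) * s \<le> q"
      using s2 pos_le_divide_eq[OF qpos, of s q] by (simp add: mult.commute)
    have cu: "Cf g \<xi> \<le> 1 - q * s"
      using C_upper[OF n1] p(2)[of \<xi>] by (simp add: q_def s_def)
    have cl: "Cf g \<xi> \<ge> 0" using C_lower[of \<xi>] s1 by (simp add: s_def)
    have "\<bar>Sf g \<xi>\<bar> \<le> 3 * s" using S_bound by (simp add: s_def)
    then have "\<bar>Sf g \<xi>\<bar>\<^sup>2 \<le> (3 * s)\<^sup>2" by (intro power_mono) auto
    then have sb: "(Sf g \<xi>)\<^sup>2 \<le> 9 * s\<^sup>2" by (simp add: power_mult_distrib)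
    have "(Cf g \<xi>)\<^sup>2 \<le> (1 - q * s)\<^sup>2" using cu cl by (intro power_mono) auto
    then have "(Cf g \<xi>)\<^sup>2 + (Sf g \<xi>)\<^sup>2 \<le> (1 - q * s)\<^sup>2 + 9 * s\<^sup>2" using sb by linarith
    also have "\<dots> = 1 - 2 * q * s + ((q\<^sup>2 + 9) * s) * s" by (simp add: power2_eq_square algebra_simps)
    also have "\<dots> \<le> 1 - 2 * q * s + q * s" using s3 s0 by (simp add: mult_right_mono)
    finally show ?thesis by (simp add: s_def)
  qed
  then show ?thesis using \<delta> q by blast
qed

end

theorem proposition10:
  fixes g :: "real^3 \<Rightarrow> real" and \<phi> :: "real \<Rightarrow> real" and K1 K2 :: real
  assumes g_nonneg: "\<And>v. g v \<ge> 0"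
    and g_int: "integrable lborel g"
    and g_mass: "(LINT v|lborel. g v) = 1"
    and g_mom1_int: "\<And>i. integrable lborel (\<lambda>v. g v * v $ i)"
    and g_mom1: "\<And>i. (LINT v|lborel. g v * v $ i) = 0"
    and g_mom2_int: "integrable lborel (\<lambda>v. g v * (norm v)\<^sup>2)"
    and g_mom2: "(LINT v|lborel. g v * (norm v)\<^sup>2) = 3"
    and K1: "K1 \<ge> 1" and K2: "K2 > 0"
    and \<phi>_nonneg: "\<And>t. t \<ge> 0 \<Longrightarrow> \<phi> t \<ge> 0"
    and \<phi>_lim: "filterlim \<phi> at_top at_top"
    and decay: "\<And>\<xi>. norm (fourier3 g \<xi>) \<le> K1 * exp (- K2 * \<phi> (norm \<xi>))"
  shows "\<exists>\<eta>>0. \<forall>R>\<eta>. \<exists>K>0.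
           (\<forall>\<xi>. norm \<xi> < R \<longrightarrow> norm (fourier3 g \<xi>) \<le> exp (- K * (norm \<xi>)\<^sup>2)) \<and>
           (\<forall>\<xi>. norm \<xi> \<ge> R \<longrightarrow> norm (fourier3 g \<xi>) \<le> exp (- K * \<phi> (norm \<xi>)))"
proof -
  note A1 = g_nonneg g_int g_mass g_mom2_int g_mom2
  note A2 = g_nonneg g_int g_mass g_mom1_int g_mom1 g_mom2_int g_mom2
  let ?F = "\<lambda>\<xi>. norm (fourier3 g \<xi>)"
  have nsq: "(?F \<xi>)\<^sup>2 = (Cf g \<xi>)\<^sup>2 + (Sf g \<xi>)\<^sup>2" for \<xi> by (rule norm_sq[OF A1])
  obtain \<delta> c where \<delta>: "\<delta> > 0" and c: "c > 0"
    and sb: "\<And>\<xi>. norm \<xi> \<le> \<delta> \<Longrightarrow> (Cf g \<xi>)\<^sup>2 + (Sf g \<xi>)\<^sup>2 \<le> 1 - c * (norm \<xi>)\<^sup>2"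
    using small_bound[OF A2] by blast
  have small: "?F \<xi> \<le> exp (- (c/2) * (norm \<xi>)\<^sup>2)" if "norm \<xi> \<le> \<delta>" for \<xi>
  proof -
    have "(?F \<xi>)\<^sup>2 \<le> 1 - c * (norm \<xi>)\<^sup>2" using sb[OF that] nsq[of \<xi>] by simp
    also have "\<dots> \<le> exp (- c * (norm \<xi>)\<^sup>2)" using exp_ge_add_one_self[of "- c * (norm \<xi>)\<^sup>2"] by simp
    also have "\<dots> = (exp (- (c/2) * (norm \<xi>)\<^sup>2))\<^sup>2" by (simp add: power2_eq_square flip: exp_add)
    finally show ?thesis by (rule power2_le_imp_le) simp
  qed
  define B where "B = 2 * ln K1 / K2 + 1"
  have "eventually (\<lambda>t. B \<le> \<phi> t) at_top" using \<phi>_lim by (simp add: filterlim_at_top)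
  then obtain T where T: "\<And>t. t \<ge> T \<Longrightarrow> B \<le> \<phi> t" by (auto simp: eventually_at_top_linorder)
  define \<eta> where "\<eta> = max T 1"
  have "\<eta> > 0" by (simp add: \<eta>_def)
  moreover have "\<exists>K>0. (\<forall>\<xi>. norm \<xi> < R \<longrightarrow> ?F \<xi> \<le> exp (- K * (norm \<xi>)\<^sup>2)) \<and>
           (\<forall>\<xi>. norm \<xi> \<ge> R \<longrightarrow> ?F \<xi> \<le> exp (- K * \<phi> (norm \<xi>)))" if R: "R > \<eta>" for R
  proof -
    have R0: "R > 0" using R by (simp add: \<eta>_def)
    define A where "A = cball (0::real^3) R - ball 0 \<delta>"
    have cA: "compact A" unfolding A_def by (intro compact_diff) auto
    have cont: "continuous_on A ?F"
      using continuous_on_subset[OF four_cont[OF A1]] by blast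
    have "\<exists>m<1. \<forall>\<xi>\<in>A. ?F \<xi> \<le> m"
    proof (cases "A = {}")
      case True then show ?thesis by (intro exI[of _ 0]) auto
    next
      case False
      obtain \<xi>0 where \<xi>0: "\<xi>0 \<in> A" "\<And>\<xi>. \<xi> \<in> A \<Longrightarrow> ?F \<xi> \<le> ?F \<xi>0"
        using continuous_attains_sup[OF cA False cont] by blast
      have "\<xi>0 \<noteq> 0" using \<xi>0(1) \<delta> by (auto simp: A_def)
      then have "(?F \<xi>0)\<^sup>2 < 1" using CS_lt1[OF A2] nsq by simp
      then have "?F \<xi>0 < 1" by (simp add: power2_less_imp_less abs_square_less_1)
      then show ?thesis using \<xi>0 by blast
    qed
    then obtain m where m: "m < 1" "\<And>\<xi>. \<xi> \<in> A \<Longrightarrow> ?F \<xi> \<le> m" by blast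
    define m' where "m' = max m (1/2)"
    have m'0: "m' > 0" "m' < 1" using m by (auto simp: m'_def)
    have lnm: "ln m' < 0" using m'0 by simp
    define K where "K = min (c/2) (min (- ln m' / R\<^sup>2) (K2/2))"
    have "ln m' / R\<^sup>2 < 0" using lnm R0 by (simp add: divide_neg_pos)
    then have Kpos: "K > 0" using c K2 by (simp add: K_def)
    have K_le1: "K \<le> c/2" and K_le2: "K \<le> - ln m' / R\<^sup>2" and K_le3: "K \<le> K2/2"
      unfolding K_def by linarith+
    have partA: "?F \<xi> \<le> exp (- K * (norm \<xi>)\<^sup>2)" if n: "norm \<xi> < R" for \<xi>
    proof (cases "norm \<xi> \<le> \<delta>")
      case True
      have "?F \<xi> \<le> exp (- (c/2) * (norm \<xi>)\<^sup>2)" by (rule small[OF True])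
      also have "\<dots> \<le> exp (- K * (norm \<xi>)\<^sup>2)"
      proof -
        have "K * (norm \<xi>)\<^sup>2 \<le> (c/2) * (norm \<xi>)\<^sup>2" using K_le1 by (intro mult_right_mono) auto
        then show ?thesis by simp
      qed
      finally show ?thesis .
    next
      case False
      then have "\<xi> \<in> A" using n by (auto simp: A_def)
      then have "?F \<xi> \<le> m'" using m(2) by (force simp: m'_def)
      also have "m' = exp (ln m')" using m'0 by simp
      also have "exp (ln m') \<le> exp (- K * (norm \<xi>)\<^sup>2)"
      proof -
        have "(norm \<xi>)\<^sup>2 \<le> R\<^sup>2" using n by (intro power_mono) auto
        then have "K * (norm \<xi>)\<^sup>2 \<le> K * R\<^sup>2" using Kpos by (intro mult_left_mono) auto
        also have "\<dots> \<le> (- ln m' / R\<^sup>2) * R\<^sup>2" using K_le2 by (intro mult_right_mono) auto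
        also have "\<dots> = - ln m'" using R0 by simp
        finally show ?thesis by simp
      qed
      finally show ?thesis .
    qed
    have partB: "?F \<xi> \<le> exp (- K * \<phi> (norm \<xi>))" if n: "norm \<xi> \<ge> R" for \<xi>
    proof -
      have "norm \<xi> \<ge> T" using n R by (simp add: \<eta>_def)
      then have Bp: "B \<le> \<phi> (norm \<xi>)" by (rule T)
      have p0: "\<phi> (norm \<xi>) \<ge> 0" by (rule \<phi>_nonneg) simp
      have "2 * ln K1 / K2 \<le> \<phi> (norm \<xi>)" using Bp by (simp add: B_def)
      then have "2 * ln K1 \<le> \<phi> (norm \<xi>) * K2" using K2 by (simp add: pos_divide_le_eq)
      then have lnK: "ln K1 + - K2 * \<phi> (norm \<xi>) \<le> - (K2/2) * \<phi> (norm \<xi>)" by (simp add: algebra_simps)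
      have "?F \<xi> \<le> K1 * exp (- K2 * \<phi> (norm \<xi>))" by (rule decay)
      also have "\<dots> = exp (ln K1 + - K2 * \<phi> (norm \<xi>))" using K1 by (simp only: exp_add) simp
      also have "\<dots> \<le> exp (- (K2/2) * \<phi> (norm \<xi>))" using lnK by simp
      also have "\<dots> \<le> exp (- K * \<phi> (norm \<xi>))"
      proof -
        have "K * \<phi> (norm \<xi>) \<le> (K2/2) * \<phi> (norm \<xi>)" using K_le3 p0 by (intro mult_right_mono) auto
        then show ?thesis by simp
      qed
      finally show ?thesis .
    qed
    show ?thesis using Kpos partA partB by blast
  qed
  ultimately show ?thesis by blast
qed

end
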